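(* Let $R$ be a commutative ring. The following are equivalent: (1) $R$ is a coherent ring; (2) $R$ is a $u$-$(R\setminus\mathfrak p)$-coherent ring for every prime ideal $\mathfrak p$ of $R$; (3) $R$ is a $u$-$(R\setminus\mathfrak m)$-coherent ring for every maximal ideal $\mathfrak m$ of $R$.
   Context: For a multiplicative subset $S$ of $R$ (containing $1$, closed under products): $M$ is $S$-finite with respect to $s\in S$ if there is a finitely generated submodule $F\subseteq M$ with $sM\subseteq F$; $M$ is $u$-$S$-finitely presented with respect to $s$ if there is an exact sequence $0\to T_1\to F\to M\to T_2\to 0$ with $F$ finitely presented and $sT_1=sT_2=0$. $R$ is a $u$-$S$-coherent ring if there is $s\in S$ such that $R$ is $S$-finite with respect to $s$ and every finitely generated ideal of $R$ is $u$-$S$-finitely presented with respect to $s$. *)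

theory Defs
  imports Main
begin

text \<open>Ideals of a commutative ring with identity, given by a type of class comm_ring_1
  (the whole ring is UNIV).\<close>

definition is_ideal :: "'a::comm_ring_1 set \<Rightarrow> bool" where
  "is_ideal I \<longleftrightarrow> 0 \<in> I \<and> (\<forall>x\<in>I. \<forall>y\<in>I. x + y \<in> I) \<and> (\<forall>r. \<forall>x\<in>I. r * x \<in> I)"

definition prime_ideal :: "'a::comm_ring_1 set \<Rightarrow> bool" where
  "prime_ideal P \<longleftrightarrow> is_ideal P \<and> P \<noteq> UNIV \<and> (\<forall>a b. a * b \<in> P \<longrightarrow> a \<in> P \<or> b \<in> P)"

definition maximal_ideal :: "'a::comm_ring_1 set \<Rightarrow> bool" where
  "maximal_ideal M \<longleftrightarrow> is_ideal M \<and> M \<noteq> UNIV \<and>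
     (\<forall>J. is_ideal J \<and> M \<subseteq> J \<longrightarrow> J = M \<or> J = UNIV)"

definition multiplicative_subset :: "'a::comm_ring_1 set \<Rightarrow> bool" where
  "multiplicative_subset S \<longleftrightarrow> 1 \<in> S \<and> (\<forall>a\<in>S. \<forall>b\<in>S. a * b \<in> S)"

definition gen_ideal :: "'a::comm_ring_1 set \<Rightarrow> 'a set" where
  "gen_ideal G = {(\<Sum>g\<in>G. c g * g) | c. True}"

definition fg_ideal :: "'a::comm_ring_1 set \<Rightarrow> bool" where
  "fg_ideal I \<longleftrightarrow> (\<exists>G. finite G \<and> I = gen_ideal G)"

text \<open>The free module R^n, realised as functions nat => R vanishing from index n on.\<close>
definition free_mod :: "nat \<Rightarrow> (nat \<Rightarrow> 'a::comm_ring_1) set" where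
  "free_mod n = {v. \<forall>i\<ge>n. v i = 0}"

definition gen_submod :: "(nat \<Rightarrow> 'a::comm_ring_1) set \<Rightarrow> (nat \<Rightarrow> 'a) set" where
  "gen_submod G = {(\<lambda>i. \<Sum>g\<in>G. c g * g i) | c. True}"

definition fg_submod :: "nat \<Rightarrow> (nat \<Rightarrow> 'a::comm_ring_1) set \<Rightarrow> bool" where
  "fg_submod n K \<longleftrightarrow> (\<exists>G. finite G \<and> G \<subseteq> free_mod n \<and> K = gen_submod G)"

definition lin_map :: "nat \<Rightarrow> (nat \<Rightarrow> 'a::comm_ring_1) \<Rightarrow> (nat \<Rightarrow> 'a) \<Rightarrow> 'a" where
  "lin_map n m v = (\<Sum>i<n. v i * m i)"

definition lin_kernel :: "nat \<Rightarrow> (nat \<Rightarrow> 'a::comm_ring_1) \<Rightarrow> (nat \<Rightarrow> 'a) set" where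
  "lin_kernel n m = {v \<in> free_mod n. lin_map n m v = 0}"

text \<open>An ideal I is finitely presented: there is an exact sequence 0 -> K -> R^n -> I -> 0
  with K finitely generated.\<close>
definition fp_ideal :: "'a::comm_ring_1 set \<Rightarrow> bool" where
  "fp_ideal I \<longleftrightarrow> (\<exists>n m. (\<forall>i<n. m i \<in> I) \<and> lin_map n m ` free_mod n = I \<and>
      fg_submod n (lin_kernel n m))"

definition coherent_ring :: "'a::comm_ring_1 itself \<Rightarrow> bool" where
  "coherent_ring _ \<longleftrightarrow> (\<forall>I::'a set. fg_ideal I \<longrightarrow> fp_ideal I)"

definition S_finite_wrt :: "'a::comm_ring_1 \<Rightarrow> 'a set \<Rightarrow> bool" where
  "S_finite_wrt s M \<longleftrightarrow> (\<exists>F. finite F \<and> F \<subseteq> M \<and> (\<lambda>x. s * x) ` M \<subseteq> gen_ideal F)"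

text \<open>u-S-finitely presented with respect to s: an exact sequence
  0 -> T1 -> F -> I -> T2 -> 0 with F finitely presented and s T1 = s T2 = 0.
  A finitely presented module F is (up to isomorphism) R^n / K with K a finitely
  generated submodule of R^n; an R-linear map R^n / K -> I is given by the images
  m 0, ..., m (n-1) in I of the basis vectors, subject to K being contained in the kernel.
  Then T1 = ker(lin_map)/K and T2 = I / image(lin_map).\<close>
definition u_S_fp_wrt :: "'a::comm_ring_1 \<Rightarrow> 'a set \<Rightarrow> bool" where
  "u_S_fp_wrt s I \<longleftrightarrow> (\<exists>n m K. fg_submod n K \<and> (\<forall>i<n. m i \<in> I) \<and>
      K \<subseteq> lin_kernel n m \<and>
      (\<forall>v\<in>lin_kernel n m. (\<lambda>i. s * v i) \<in> K) \<and>
      (\<forall>x\<in>I. s * x \<in> lin_map n m ` free_mod n))"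

definition u_S_coherent :: "'a::comm_ring_1 set \<Rightarrow> bool" where
  "u_S_coherent S \<longleftrightarrow> (\<exists>s\<in>S. S_finite_wrt s (UNIV::'a set) \<and>
      (\<forall>I. fg_ideal I \<longrightarrow> u_S_fp_wrt s I))"

end

theory Submission
  imports Defs
begin

definition submod :: "(nat \<Rightarrow> 'a::comm_ring_1) set \<Rightarrow> bool" where
  "submod L \<longleftrightarrow> (\<lambda>i. 0) \<in> L \<and> (\<forall>u\<in>L. \<forall>v\<in>L. (\<lambda>i. u i + v i) \<in> L)
     \<and> (\<forall>r. \<forall>v\<in>L. (\<lambda>i. r * v i) \<in> L)"

lemma submod_add: "submod L \<Longrightarrow> u \<in> L \<Longrightarrow> v \<in> L \<Longrightarrow> (\<lambda>i. u i + v i) \<in> L"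
  unfolding submod_def by blast
lemma submod_smult: "submod L \<Longrightarrow> v \<in> L \<Longrightarrow> (\<lambda>i. r * v i) \<in> L"
  unfolding submod_def by blast
lemma submod_zero: "submod L \<Longrightarrow> (\<lambda>i. 0) \<in> L"
  unfolding submod_def by blast

lemma submod_sum:
  assumes "submod L" "finite A" "\<forall>x\<in>A. f x \<in> L"
  shows "(\<lambda>i. \<Sum>x\<in>A. c x * f x i) \<in> L"
  using assms(2,3)
proof (induction A rule: finite_induct)
  case empty
  then show ?case using assms(1) by (simp add: submod_def)
next
  case (insert x F)
  have a: "(\<lambda>i. c x * f x i) \<in> L" using insert assms(1) by (simp add: submod_def)
  have b: "(\<lambda>i. \<Sum>x\<in>F. c x * f x i) \<in> L" using insert by simp
  have "(\<lambda>i. c x * f x i + (\<Sum>x\<in>F. c x * f x i)) \<in> L"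
    using submod_add[OF assms(1) a b] .
  then show ?case using insert by simp
qed

lemma submod_gen: "submod (gen_submod G)"
  unfolding submod_def gen_submod_def
proof (intro conjI ballI allI)
  show "(\<lambda>i. 0) \<in> {\<lambda>i. \<Sum>g\<in>G. c g * g i |c. True}"
    by (rule CollectI, rule exI[of _ "\<lambda>_. 0"]) simp
next
  fix u v assume "u \<in> {\<lambda>i. \<Sum>g\<in>G. c g * g i |c. True}" "v \<in> {\<lambda>i. \<Sum>g\<in>G. c g * g i |c. True}"
  then obtain c1 c2 where "u = (\<lambda>i. \<Sum>g\<in>G. c1 g * g i)" "v = (\<lambda>i. \<Sum>g\<in>G. c2 g * g i)" by auto
  then show "(\<lambda>i. u i + v i) \<in> {\<lambda>i. \<Sum>g\<in>G. c g * g i |c. True}"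
    by (intro CollectI exI[of _ "\<lambda>g. c1 g + c2 g"]) (simp add: sum.distrib distrib_right)
next
  fix r v assume "v \<in> {\<lambda>i. \<Sum>g\<in>G. c g * g i |c. True}"
  then obtain c1 where "v = (\<lambda>i. \<Sum>g\<in>G. c1 g * g i)" by auto
  then show "(\<lambda>i. r * v i) \<in> {\<lambda>i. \<Sum>g\<in>G. c g * g i |c. True}"
    by (intro CollectI exI[of _ "\<lambda>g. r * c1 g"]) (simp add: sum_distrib_left mult.assoc)
qed

lemma gen_submod_mem: assumes "finite G" "g \<in> G" shows "g \<in> gen_submod G"
proof -
  have eq: "(\<lambda>i. \<Sum>h\<in>G. (if h = g then 1 else 0) * h i) = g"
  proof
    fix i
    have "(\<Sum>h\<in>G. (if h = g then 1 else 0) * h i) = (\<Sum>h\<in>G. (if h = g then h i else 0))"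
      by (rule sum.cong) auto
    also have "\<dots> = g i" using assms by (simp add: sum.delta')
    finally show "(\<Sum>h\<in>G. (if h = g then 1 else 0) * h i) = g i" .
  qed
  show ?thesis unfolding gen_submod_def
    by (rule CollectI, rule exI[of _ "\<lambda>h. if h = g then 1 else 0"], simp only: eq)
qed

lemma gen_submod_least:
  assumes "submod L" "finite G" "G \<subseteq> L" shows "gen_submod G \<subseteq> L"
  unfolding gen_submod_def using submod_sum[OF assms(1,2), of "\<lambda>x. x"] assms(3) by auto

lemma submod_kernel: "submod (lin_kernel n m)"
  unfolding submod_def
proof (intro conjI ballI allI)
  show "(\<lambda>i. 0) \<in> lin_kernel n m" by (simp add: lin_kernel_def free_mod_def lin_map_def)
next
  fix u v assume u: "u \<in> lin_kernel n m" and v: "v \<in> lin_kernel n m"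
  have "(\<Sum>i<n. (u i + v i) * m i) = (\<Sum>i<n. u i * m i) + (\<Sum>i<n. v i * m i)"
    by (simp add: distrib_right sum.distrib)
  then show "(\<lambda>i. u i + v i) \<in> lin_kernel n m"
    using u v by (simp add: lin_kernel_def free_mod_def lin_map_def)
next
  fix r v assume v: "v \<in> lin_kernel n m"
  have "(\<Sum>i<n. (r * v i) * m i) = r * (\<Sum>i<n. v i * m i)"
    by (simp add: sum_distrib_left mult.assoc)
  then show "(\<lambda>i. r * v i) \<in> lin_kernel n m"
    using v by (simp add: lin_kernel_def free_mod_def lin_map_def)
qed

lemma ideal_one: "is_ideal I \<Longrightarrow> 1 \<in> I \<Longrightarrow> I = UNIV"
  unfolding is_ideal_def by (metis UNIV_eq_I mult.right_neutral)

lemma maximal_prime: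
  fixes M :: "'a::comm_ring_1 set"
  assumes "maximal_ideal M" shows "prime_ideal M"
proof -
  have iM: "is_ideal M" and nU: "M \<noteq> UNIV" and mx: "\<And>J. is_ideal J \<Longrightarrow> M \<subseteq> J \<Longrightarrow> J = M \<or> J = UNIV"
    using assms unfolding maximal_ideal_def by auto
  have M0: "0 \<in> M" and Madd: "\<And>x y. x \<in> M \<Longrightarrow> y \<in> M \<Longrightarrow> x + y \<in> M"
    and Mmul: "\<And>r x. x \<in> M \<Longrightarrow> r * x \<in> M" using iM unfolding is_ideal_def by auto
  have "a \<in> M \<or> b \<in> M" if ab: "a * b \<in> M" for a b
  proof (rule ccontr)
    assume n: "\<not> (a \<in> M \<or> b \<in> M)"
    define J where "J = {x + r * a | x r. x \<in> M}"
    have Jmem: "x + r * a \<in> J" if "x \<in> M" for x r unfolding J_def using that by blast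
    have "is_ideal J" unfolding is_ideal_def
    proof (intro conjI ballI allI)
      show "0 \<in> J" using Jmem[OF M0, of 0] by simp
    next
      fix u v assume "u \<in> J" "v \<in> J"
      then obtain x1 r1 x2 r2 where uv: "u = x1 + r1 * a" "v = x2 + r2 * a" "x1 \<in> M" "x2 \<in> M"
        unfolding J_def by blast
      have "u + v = (x1 + x2) + (r1 + r2) * a" using uv by (simp add: algebra_simps)
      then show "u + v \<in> J" using Jmem[OF Madd[OF uv(3,4)]] by simp
    next
      fix s u assume "u \<in> J"
      then obtain x1 r1 where u: "u = x1 + r1 * a" "x1 \<in> M" unfolding J_def by blast
      have "s * u = s * x1 + (s * r1) * a" using u by (simp add: algebra_simps)
      then show "s * u \<in> J" using Jmem[OF Mmul[OF u(2)]] by simp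
    qed
    moreover have "M \<subseteq> J" using Jmem[of _ 0] by auto
    moreover have "a \<in> J" using Jmem[OF M0, of 1] by simp
    ultimately have "J = UNIV" using mx n by blast
    then have "1 \<in> J" by simp
    then obtain x r where xr: "1 = x + r * a" "x \<in> M" unfolding J_def by blast
    have "b = b * (x + r * a)" using xr(1) by simp
    also have "\<dots> = b * x + r * (a * b)" by (simp add: algebra_simps)
    finally have beq: "b = b * x + r * (a * b)" .
    have "b * x \<in> M" using Mmul[OF xr(2)] by (simp add: mult.commute)
    moreover have "r * (a * b) \<in> M" using Mmul[OF ab] .
    ultimately have "b \<in> M" using Madd beq by metis
    then show False using n by blast
  qed
  then show ?thesis using iM nU unfolding prime_ideal_def by blast
qed
lemma exists_maximal:
  fixes J :: "'a::comm_ring_1 set"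
  assumes "is_ideal J" "1 \<notin> J"
  shows "\<exists>M. maximal_ideal M \<and> J \<subseteq> M"
proof -
  define A where "A = {K::'a set. is_ideal K \<and> J \<subseteq> K \<and> 1 \<notin> K}"
  have "\<forall>C\<in>chains A. \<exists>U\<in>A. \<forall>X\<in>C. X \<subseteq> U"
  proof
    fix C assume C: "C \<in> chains A"
    show "\<exists>U\<in>A. \<forall>X\<in>C. X \<subseteq> U"
    proof (cases "C = {}")
      case True then show ?thesis using assms unfolding A_def by blast
    next
      case False
      have CA: "C \<subseteq> A" and ch: "\<And>X Y. X \<in> C \<Longrightarrow> Y \<in> C \<Longrightarrow> X \<subseteq> Y \<or> Y \<subseteq> X"
        using C unfolding chains_def chain_subset_def by auto
      have "is_ideal (\<Union>C)" unfolding is_ideal_def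
      proof (intro conjI ballI allI)
        show "0 \<in> \<Union>C" using False CA unfolding A_def is_ideal_def by blast
      next
        fix x y assume "x \<in> \<Union>C" "y \<in> \<Union>C"
        then obtain X Y where "x \<in> X" "y \<in> Y" "X \<in> C" "Y \<in> C" by blast
        then show "x + y \<in> \<Union>C" using ch[of X Y] CA unfolding A_def is_ideal_def by blast
      next
        fix r x assume "x \<in> \<Union>C"
        then show "r * x \<in> \<Union>C" using CA unfolding A_def is_ideal_def by blast
      qed
      moreover have "J \<subseteq> \<Union>C" "1 \<notin> \<Union>C" using False CA unfolding A_def by auto
      ultimately show ?thesis unfolding A_def by blast
    qed
  qed
  from Zorn_Lemma2[OF this] obtain M where MA: "M \<in> A" and mx: "\<forall>X\<in>A. M \<subseteq> X \<longrightarrow> X = M" by blast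
  have "maximal_ideal M" unfolding maximal_ideal_def
  proof (intro conjI allI impI)
    show "is_ideal M" using MA unfolding A_def by blast
    show "M \<noteq> UNIV" using MA unfolding A_def by blast
    fix K assume K: "is_ideal K \<and> M \<subseteq> K"
    show "K = M \<or> K = UNIV"
    proof (cases "1 \<in> K")
      case True then show ?thesis using ideal_one K by blast
    next
      case False then show ?thesis using K MA mx unfolding A_def by blast
    qed
  qed
  then show ?thesis using MA unfolding A_def by blast
qed


lemma key:
  fixes \<phi> :: "nat \<Rightarrow> 'a::comm_ring_1"
  assumes I: "I = lin_map n \<phi> ` free_mod n" and phiI: "\<forall>i<n. \<phi> i \<in> I" and u: "u_S_fp_wrt s I"
  shows "\<exists>H. finite H \<and> H \<subseteq> lin_kernel n \<phi> \<and> (\<forall>v\<in>lin_kernel n \<phi>. (\<lambda>i. s*s*v i) \<in> gen_submod H)"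
proof -
  obtain p m K where fgK: "fg_submod p K" and mI: "\<forall>i<p. m i \<in> I" and Kk: "K \<subseteq> lin_kernel p m"
    and sK: "\<forall>v\<in>lin_kernel p m. (\<lambda>i. s * v i) \<in> K" and sI: "\<forall>x\<in>I. s * x \<in> lin_map p m ` free_mod p"
    using u unfolding u_S_fp_wrt_def by blast
  obtain GK where GK: "finite GK" "GK \<subseteq> free_mod p" "K = gen_submod GK" using fgK unfolding fg_submod_def by blast
  have "\<forall>i. \<exists>w. i < n \<longrightarrow> w \<in> free_mod p \<and> s * \<phi> i = lin_map p m w"
    using sI phiI by blast
  then obtain a where a: "\<And>i. i < n \<Longrightarrow> a i \<in> free_mod p \<and> s * \<phi> i = lin_map p m (a i)" by metis
  have "\<forall>k. \<exists>w. k < p \<longrightarrow> w \<in> free_mod n \<and> m k = lin_map n \<phi> w"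
    using mI I by blast
  then obtain b where b: "\<And>k. k < p \<Longrightarrow> b k \<in> free_mod n \<and> m k = lin_map n \<phi> (b k)" by metis
  define \<alpha> where "\<alpha> v = (\<lambda>k. \<Sum>i<n. v i * a i k)" for v
  define \<beta> where "\<beta> w = (\<lambda>j. \<Sum>k<p. w k * b k j)" for w
  define \<gamma> where "\<gamma> i = (\<lambda>j. (if j = i then s else 0) - \<beta> (a i) j)" for i
  define L where "L = lin_kernel n \<phi>"
  have subL: "submod L" unfolding L_def by (rule submod_kernel)
  have \<alpha>free: "\<alpha> v \<in> free_mod p" for v
    using a unfolding \<alpha>_def free_mod_def by simp
  have \<beta>free: "\<beta> w \<in> free_mod n" for w
    using b unfolding \<beta>_def free_mod_def by simp
  have \<alpha>map: "lin_map p m (\<alpha> v) = s * lin_map n \<phi> v" for v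
  proof -
    have "lin_map p m (\<alpha> v) = (\<Sum>k<p. \<Sum>i<n. v i * a i k * m k)"
      unfolding lin_map_def \<alpha>_def by (simp add: sum_distrib_right)
    also have "\<dots> = (\<Sum>i<n. \<Sum>k<p. v i * a i k * m k)" by (rule sum.swap)
    also have "\<dots> = (\<Sum>i<n. v i * lin_map p m (a i))"
      unfolding lin_map_def by (simp add: sum_distrib_left mult.assoc)
    also have "\<dots> = (\<Sum>i<n. v i * (s * \<phi> i))" using a by simp
    also have "\<dots> = s * lin_map n \<phi> v" unfolding lin_map_def
      by (simp add: sum_distrib_left mult.assoc mult.left_commute)
    finally show ?thesis .
  qed
  have \<beta>map: "lin_map n \<phi> (\<beta> w) = lin_map p m w" for w
  proof -
    have "lin_map n \<phi> (\<beta> w) = (\<Sum>j<n. \<Sum>k<p. w k * b k j * \<phi> j)"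
      unfolding lin_map_def \<beta>_def by (simp add: sum_distrib_right)
    also have "\<dots> = (\<Sum>k<p. \<Sum>j<n. w k * b k j * \<phi> j)" by (rule sum.swap)
    also have "\<dots> = (\<Sum>k<p. w k * lin_map n \<phi> (b k))"
      unfolding lin_map_def by (simp add: sum_distrib_left mult.assoc)
    also have "\<dots> = (\<Sum>k<p. w k * m k)" using b by simp
    finally show ?thesis unfolding lin_map_def .
  qed
  have \<gamma>L: "\<gamma> i \<in> L" if "i < n" for i
  proof -
    have "\<gamma> i \<in> free_mod n" using that \<beta>free unfolding \<gamma>_def free_mod_def by auto
    moreover have "lin_map n \<phi> (\<gamma> i) = 0"
    proof -
      have "lin_map n \<phi> (\<gamma> i) = (\<Sum>j<n. (if j = i then s else 0) * \<phi> j) - lin_map n \<phi> (\<beta> (a i))"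
        unfolding lin_map_def \<gamma>_def by (simp add: left_diff_distrib sum_subtractf)
      also have "(\<Sum>j<n. (if j = i then s else 0) * \<phi> j) = s * \<phi> i"
      proof -
        have "(\<Sum>j<n. (if j = i then s else 0) * \<phi> j) = (\<Sum>j<n. if j = i then s * \<phi> j else 0)"
          by (rule sum.cong) auto
        then show ?thesis using that by simp
      qed
      finally show ?thesis using \<beta>map a[OF that] by simp
    qed
    ultimately show ?thesis unfolding L_def lin_kernel_def by simp
  qed
  have \<beta>L: "\<beta> g \<in> L" if "g \<in> GK" for g
  proof -
    have "g \<in> lin_kernel p m" using that GK Kk gen_submod_mem by blast
    then have "lin_map p m g = 0" unfolding lin_kernel_def by simp
    then show ?thesis using \<beta>map \<beta>free unfolding L_def lin_kernel_def by simp
  qed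
  define H where "H = \<gamma> ` {..<n} \<union> \<beta> ` GK"
  have finH: "finite H" unfolding H_def using GK by simp
  have HL: "H \<subseteq> L" unfolding H_def using \<gamma>L \<beta>L by auto
  have subH: "submod (gen_submod H)" by (rule submod_gen)
  have HH: "\<forall>x\<in>H. x \<in> gen_submod H" using finH gen_submod_mem by blast
  have "(\<lambda>i. s*s*v i) \<in> gen_submod H" if v: "v \<in> L" for v
  proof -
    have vf: "v \<in> free_mod n" and v0: "lin_map n \<phi> v = 0" using v unfolding L_def lin_kernel_def by auto
    have "\<alpha> v \<in> lin_kernel p m" using \<alpha>free \<alpha>map v0 unfolding lin_kernel_def by simp
    then have "(\<lambda>k. s * \<alpha> v k) \<in> gen_submod GK" using sK GK by blast
    then obtain c where c: "(\<lambda>k. s * \<alpha> v k) = (\<lambda>k. \<Sum>g\<in>GK. c g * g k)" unfolding gen_submod_def by blast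
    have \<beta>lin: "\<beta> (\<lambda>k. \<Sum>g\<in>GK. c g * g k) = (\<lambda>j. \<Sum>g\<in>GK. c g * \<beta> g j)"
      unfolding \<beta>_def by (auto simp: sum_distrib_right sum_distrib_left mult.assoc intro: sum.swap)
    have part2: "\<beta> (\<lambda>k. s * \<alpha> v k) \<in> gen_submod H"
      unfolding c \<beta>lin by (rule submod_sum[OF subH GK(1)]) (use HH H_def in auto)
    have part1: "(\<lambda>j. \<Sum>i\<in>{..<n}. (s * v i) * \<gamma> i j) \<in> gen_submod H"
      by (rule submod_sum[OF subH]) (use HH H_def in auto)
    have eq: "s*s*v j = (\<Sum>i\<in>{..<n}. (s * v i) * \<gamma> i j) + \<beta> (\<lambda>k. s * \<alpha> v k) j" for j
    proof -
      have e1: "(\<Sum>i<n. v i * (if j = i then s else 0)) = s * v j"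
      proof (cases "j < n")
        case True
        have "(\<Sum>i<n. v i * (if j = i then s else 0)) = (\<Sum>i<n. if i = j then v i * s else 0)"
          by (rule sum.cong) auto
        then show ?thesis using True by (simp add: mult.commute)
      next
        case False
        have "(\<Sum>i<n. v i * (if j = i then s else 0)) = 0" using False by (intro sum.neutral) auto
        then show ?thesis using False vf unfolding free_mod_def by simp
      qed
      have e2: "(\<Sum>i<n. v i * \<beta> (a i) j) = \<beta> (\<alpha> v) j"
      proof -
        have "(\<Sum>i<n. v i * \<beta> (a i) j) = (\<Sum>i<n. \<Sum>k<p. v i * a i k * b k j)"
          unfolding \<beta>_def by (simp add: sum_distrib_left mult.assoc)
        also have "\<dots> = (\<Sum>k<p. \<Sum>i<n. v i * a i k * b k j)" by (rule sum.swap)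
        also have "\<dots> = \<beta> (\<alpha> v) j" unfolding \<beta>_def \<alpha>_def by (simp add: sum_distrib_right)
        finally show ?thesis .
      qed
      have e3: "\<beta> (\<lambda>k. s * \<alpha> v k) j = s * \<beta> (\<alpha> v) j"
        unfolding \<beta>_def by (simp add: sum_distrib_left mult.assoc)
      have "(\<Sum>i\<in>{..<n}. (s * v i) * \<gamma> i j) = s * (\<Sum>i<n. v i * (if j = i then s else 0)) - s * (\<Sum>i<n. v i * \<beta> (a i) j)"
        unfolding \<gamma>_def by (simp add: sum_distrib_left right_diff_distrib sum_subtractf mult.assoc)
      then show ?thesis using e1 e2 e3 by (simp add: mult.assoc)
    qed
    have "(\<lambda>j. s*s*v j) = (\<lambda>j. (\<Sum>i\<in>{..<n}. (s * v i) * \<gamma> i j) + \<beta> (\<lambda>k. s * \<alpha> v k) j)"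
      using eq by auto
    then show ?thesis using submod_add[OF subH part1 part2] by simp
  qed
  then show ?thesis using finH HL unfolding L_def by blast
qed


lemma gen_ideal_mem: assumes "finite G" "g \<in> G" shows "g \<in> gen_ideal G"
proof -
  have "(\<Sum>h\<in>G. (if h = g then 1 else 0) * h) = (\<Sum>h\<in>G. (if h = g then h else 0))"
    by (rule sum.cong) auto
  also have "\<dots> = g" using assms by (simp add: sum.delta')
  finally have eq: "(\<Sum>h\<in>G. (if h = g then 1 else 0) * h) = g" .
  show ?thesis unfolding gen_ideal_def
    by (rule CollectI, rule exI[of _ "\<lambda>h. if h = g then 1 else 0"], simp only: eq)
qed

lemma fg_enum:
  fixes I :: "'a::comm_ring_1 set"
  assumes "fg_ideal I"
  shows "\<exists>n \<phi>. (\<forall>i<n. \<phi> i \<in> I) \<and> lin_map n \<phi> ` free_mod n = I"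
proof -
  obtain G where G: "finite G" "I = gen_ideal G" using assms unfolding fg_ideal_def by blast
  obtain xs where xs: "set xs = G" "distinct xs" using finite_distinct_list[OF G(1)] by blast
  define n where "n = length xs"
  define \<phi> where "\<phi> i = xs ! i" for i
  have bij: "bij_betw \<phi> {..<n} G" unfolding \<phi>_def n_def using bij_betw_nth[OF xs(2)] xs(1) by simp
  have "\<phi> i \<in> I" if "i < n" for i
    using G gen_ideal_mem bij that unfolding bij_betw_def by blast
  moreover have "lin_map n \<phi> ` free_mod n = I"
  proof
    show "lin_map n \<phi> ` free_mod n \<subseteq> I"
    proof
      fix x assume "x \<in> lin_map n \<phi> ` free_mod n"
      then obtain v where x: "x = (\<Sum>i<n. v i * \<phi> i)" unfolding lin_map_def by blast
      define c where "c y = v (inv_into {..<n} \<phi> y)" for y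
      have "(\<Sum>i<n. v i * \<phi> i) = (\<Sum>i<n. c (\<phi> i) * \<phi> i)"
        unfolding c_def using bij by (intro sum.cong) (auto simp: bij_betw_def inv_into_f_f)
      also have "\<dots> = (\<Sum>g\<in>G. c g * g)" by (rule sum.reindex_bij_betw[OF bij])
      finally show "x \<in> I" using x G(2) unfolding gen_ideal_def by blast
    qed
  next
    show "I \<subseteq> lin_map n \<phi> ` free_mod n"
    proof
      fix x assume "x \<in> I"
      then obtain c where x: "x = (\<Sum>g\<in>G. c g * g)" using G(2) unfolding gen_ideal_def by blast
      define v where "v i = (if i < n then c (\<phi> i) else 0)" for i
      have "x = (\<Sum>i<n. c (\<phi> i) * \<phi> i)" unfolding x by (rule sum.reindex_bij_betw[OF bij, symmetric])
      also have "\<dots> = lin_map n \<phi> v" unfolding lin_map_def v_def by simp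
      finally show "x \<in> lin_map n \<phi> ` free_mod n" unfolding free_mod_def v_def by auto
    qed
  qed
  ultimately show ?thesis by blast
qed

lemma one_notin_prime: "prime_ideal P \<Longrightarrow> 1 \<notin> P"
  unfolding prime_ideal_def using ideal_one by blast

lemma S_finite_one: "S_finite_wrt s (UNIV::'a::comm_ring_1 set)"
proof -
  have "y \<in> gen_ideal {1::'a}" for y
    unfolding gen_ideal_def by (rule CollectI, rule exI[of _ "\<lambda>_. y"]) simp
  then show ?thesis unfolding S_finite_wrt_def by (intro exI[of _ "{1}"]) auto
qed

lemma partA:
  assumes "coherent_ring (R::'a::comm_ring_1 itself)" "prime_ideal (P::'a set)"
  shows "u_S_coherent (UNIV - P)"
  unfolding u_S_coherent_def
proof (intro bexI[of _ 1] conjI allI impI)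
  show "1 \<in> UNIV - P" using one_notin_prime assms(2) by blast
  show "S_finite_wrt 1 (UNIV::'a set)" by (rule S_finite_one)
  fix I :: "'a set" assume "fg_ideal I"
  then have "fp_ideal I" using assms(1) unfolding coherent_ring_def by blast
  then obtain n m where "\<forall>i<n. m i \<in> I" "lin_map n m ` free_mod n = I" "fg_submod n (lin_kernel n m)"
    unfolding fp_ideal_def by blast
  then show "u_S_fp_wrt 1 I" unfolding u_S_fp_wrt_def
    by (intro exI[of _ n] exI[of _ m] exI[of _ "lin_kernel n m"]) auto
qed

lemma partC:
  assumes "\<forall>M::'a::comm_ring_1 set. maximal_ideal M \<longrightarrow> u_S_coherent (UNIV - M)"
  shows "coherent_ring (R::'a itself)"
  unfolding coherent_ring_def
proof (intro allI impI)
  fix I :: "'a set" assume "fg_ideal I"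
  then obtain n \<phi> where phiI: "\<forall>i<n. \<phi> i \<in> I" and I: "lin_map n \<phi> ` free_mod n = I"
    using fg_enum by blast
  define L where "L = lin_kernel n \<phi>"
  have subL: "submod L" unfolding L_def by (rule submod_kernel)
  define J where "J = {t. \<exists>H. finite H \<and> H \<subseteq> L \<and> (\<forall>v\<in>L. (\<lambda>i. t * v i) \<in> gen_submod H)}"
  have iJ: "is_ideal J" unfolding is_ideal_def
  proof (intro conjI ballI allI)
    show "0 \<in> J" unfolding J_def using submod_zero[OF submod_gen[of "{}::(nat \<Rightarrow> 'a) set"]] by auto
  next
    fix x y assume "x \<in> J" "y \<in> J"
    then obtain H1 H2 where H1: "finite H1" "H1 \<subseteq> L" "\<forall>v\<in>L. (\<lambda>i. x * v i) \<in> gen_submod H1"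
      and H2: "finite H2" "H2 \<subseteq> L" "\<forall>v\<in>L. (\<lambda>i. y * v i) \<in> gen_submod H2" unfolding J_def by blast
    have m1: "gen_submod H1 \<subseteq> gen_submod (H1 \<union> H2)"
      by (rule gen_submod_least[OF submod_gen H1(1)]) (use gen_submod_mem H1 H2 in blast)
    have m2: "gen_submod H2 \<subseteq> gen_submod (H1 \<union> H2)"
      by (rule gen_submod_least[OF submod_gen H2(1)]) (use gen_submod_mem H1 H2 in blast)
    have "(\<lambda>i. (x + y) * v i) \<in> gen_submod (H1 \<union> H2)" if "v \<in> L" for v
      using submod_add[OF submod_gen, of "\<lambda>i. x * v i" "H1 \<union> H2" "\<lambda>i. y * v i"] m1 m2 H1(3) H2(3) that
      by (auto simp: distrib_right)
    then show "x + y \<in> J" unfolding J_def using H1 H2 by (intro CollectI exI[of _ "H1 \<union> H2"]) auto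
  next
    fix r x assume "x \<in> J"
    then obtain H1 where H1: "finite H1" "H1 \<subseteq> L" "\<forall>v\<in>L. (\<lambda>i. x * v i) \<in> gen_submod H1"
      unfolding J_def by blast
    have "(\<lambda>i. (r * x) * v i) \<in> gen_submod H1" if "v \<in> L" for v
      using submod_smult[OF submod_gen, of "\<lambda>i. x * v i" H1 r] H1(3) that by (simp add: mult.assoc)
    then show "r * x \<in> J" unfolding J_def using H1 by blast
  qed
  show "fp_ideal I"
  proof (cases "1 \<in> J")
    case True
    then obtain H where H: "finite H" "H \<subseteq> L" "\<forall>v\<in>L. v \<in> gen_submod H" unfolding J_def by auto
    have "L = gen_submod H" using H gen_submod_least[OF subL H(1,2)] by blast
    moreover have "H \<subseteq> free_mod n" using H(2) unfolding L_def lin_kernel_def by blast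
    ultimately have "fg_submod n L" unfolding fg_submod_def using H(1) by blast
    then show ?thesis unfolding fp_ideal_def L_def using phiI I by blast
  next
    case False
    then obtain M where M: "maximal_ideal M" "J \<subseteq> M" using exists_maximal iJ by blast
    then obtain s where s: "s \<notin> M" "u_S_fp_wrt s I" using assms \<open>fg_ideal I\<close> unfolding u_S_coherent_def by blast
    have "s * s \<in> J" using key[OF I[symmetric] phiI s(2)] unfolding J_def L_def by blast
    then have "s * s \<in> M" using M by blast
    then show ?thesis using maximal_prime[OF M(1)] s(1) unfolding prime_ideal_def by blast
  qed
qed

theorem proposition3p9:
  fixes R :: "'a::comm_ring_1 itself"
  shows "(coherent_ring R \<longleftrightarrow> (\<forall>P::'a set. prime_ideal P \<longrightarrow> u_S_coherent (UNIV - P)))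
    \<and> ((\<forall>P::'a set. prime_ideal P \<longrightarrow> u_S_coherent (UNIV - P))
        \<longleftrightarrow> (\<forall>M::'a set. maximal_ideal M \<longrightarrow> u_S_coherent (UNIV - M)))"
  using partA[of R] partC[where R=R] maximal_prime by blast

end
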